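(* For every cograph $(V,E)$ there are $d<\omega$ and an injective function $f:V\to(2^2)^d$ such that for all distinct $v_0,v_1\in V$: $v_0\mathrel{E}v_1$ if and only if $\{f(v_0),f(v_1)\}$ is an up-$1$-comb, and $\neg\, v_0\mathrel{E}v_1$ if and only if $\{f(v_0),f(v_1)\}$ is a wide right-$1$-comb.
   Context: Cographs: for graphs $G_0=(V_0,E_0),G_1=(V_1,E_1)$ on disjoint vertex sets, the coproduct is $(V_0\cup V_1,E_0\cup E_1)$ and the graph join is $(V_0\cup V_1,E_0\cup E_1\cup\{\{a,b\}:a\in V_0,b\in V_1\})$; cographs form the smallest class of graphs containing the one-vertex graph and closed (up to isomorphism) under coproducts and graph joins. $2^2=\{0,1\}^2$; $(2^2)^d$ is the set of sequences of length $d$ with entries in $2^2$, $(2^2)^{<d}$ those of length $<d$, $\tau^\frown a$ concatenation. For $A,B\subseteq(2^2)^d$: $A$ narrowly below $B$: some $\tau\in(2^2)^{<d}$, $i<2$ with all elements of $A$ extending $\tau^\frown(i,0)$ and all of $B$ extending $\tau^\frown(i,1)$; $A$ narrowly to the left of $B$: some $\tau$, $j<2$ with $A$'s extending $\tau^\frown(0,j)$ and $B$'s extending $\tau^\frown(1,j)$; $A$ widely to the left of $B$: some $\sigma$ with $A$'s extending $\sigma^\frown(0,0)$ or $\sigma^\frown(0,1)$ and $B$'s extending $\sigma^\frown(1,0)$ or $\sigma^\frown(1,1)$. Up-$1$-combs: smallest class of finite sets containing singletons and containing $A\cup B$ whenever $A,B$ are up-$1$-combs, $|A|\le 1$, $A$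 narrowly below $B$; right-$1$-combs likewise with narrowly left; wide right-$1$-combs: smallest class containing singletons and containing $A\cup B$ whenever $A,B$ are right-$1$-combs, $|A|\le1$, $A$ widely left of $B$. *)

theory Defs
  imports Main "HOL-Library.Sublist"
begin

text \<open>A graph is a pair (V,E) with E a set of two-element subsets {a,b} of V.
  v0 E v1 means {v0,v1} \<in> E.\<close>

definition coproduct_edges :: "'a set set \<Rightarrow> 'a set set \<Rightarrow> 'a set set" where
  "coproduct_edges E0 E1 = E0 \<union> E1"

definition join_edges :: "'a set \<Rightarrow> 'a set set \<Rightarrow> 'a set \<Rightarrow> 'a set set \<Rightarrow> 'a set set" where
  "join_edges V0 E0 V1 E1 = E0 \<union> E1 \<union> {{a, b} | a b. a \<in> V0 \<and> b \<in> V1}"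

inductive cograph :: "'a set \<Rightarrow> 'a set set \<Rightarrow> bool" where
  single: "cograph {v} {}"
| coprod: "\<lbrakk>cograph V0 E0; cograph V1 E1; V0 \<inter> V1 = {}\<rbrakk>
            \<Longrightarrow> cograph (V0 \<union> V1) (coproduct_edges E0 E1)"
| join: "\<lbrakk>cograph V0 E0; cograph V1 E1; V0 \<inter> V1 = {}\<rbrakk>
            \<Longrightarrow> cograph (V0 \<union> V1) (join_edges V0 E0 V1 E1)"

definition two2 :: "(nat \<times> nat) set" where
  "two2 = {0, 1} \<times> {0, 1}"

definition seqs :: "nat \<Rightarrow> (nat \<times> nat) list set" where
  "seqs d = {s. length s = d \<and> set s \<subseteq> two2}"

definition seqs_lt :: "nat \<Rightarrow> (nat \<times> nat) list set" where
  "seqs_lt d = {s. length s < d \<and> set s \<subseteq> two2}"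

definition narrowly_below :: "nat \<Rightarrow> (nat \<times> nat) list set \<Rightarrow> (nat \<times> nat) list set \<Rightarrow> bool" where
  "narrowly_below d A B \<longleftrightarrow> (\<exists>\<tau> i. \<tau> \<in> seqs_lt d \<and> i < 2 \<and>
      (\<forall>a\<in>A. prefix (\<tau> @ [(i, 0)]) a) \<and> (\<forall>b\<in>B. prefix (\<tau> @ [(i, 1)]) b))"

definition narrowly_left :: "nat \<Rightarrow> (nat \<times> nat) list set \<Rightarrow> (nat \<times> nat) list set \<Rightarrow> bool" where
  "narrowly_left d A B \<longleftrightarrow> (\<exists>\<tau> j. \<tau> \<in> seqs_lt d \<and> j < 2 \<and>
      (\<forall>a\<in>A. prefix (\<tau> @ [(0, j)]) a) \<and> (\<forall>b\<in>B. prefix (\<tau> @ [(1, j)]) b))"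

definition widely_left :: "nat \<Rightarrow> (nat \<times> nat) list set \<Rightarrow> (nat \<times> nat) list set \<Rightarrow> bool" where
  "widely_left d A B \<longleftrightarrow> (\<exists>\<sigma>. \<sigma> \<in> seqs_lt d \<and>
      (\<forall>a\<in>A. prefix (\<sigma> @ [(0, 0)]) a \<or> prefix (\<sigma> @ [(0, 1)]) a) \<and>
      (\<forall>b\<in>B. prefix (\<sigma> @ [(1, 0)]) b \<or> prefix (\<sigma> @ [(1, 1)]) b))"

inductive up_comb :: "nat \<Rightarrow> (nat \<times> nat) list set \<Rightarrow> bool" for d where
  single: "s \<in> seqs d \<Longrightarrow> up_comb d {s}"
| step: "\<lbrakk>up_comb d A; up_comb d B; card A \<le> 1; narrowly_below d A B\<rbrakk>
           \<Longrightarrow> up_comb d (A \<union> B)"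

inductive right_comb :: "nat \<Rightarrow> (nat \<times> nat) list set \<Rightarrow> bool" for d where
  single: "s \<in> seqs d \<Longrightarrow> right_comb d {s}"
| step: "\<lbrakk>right_comb d A; right_comb d B; card A \<le> 1; narrowly_left d A B\<rbrakk>
           \<Longrightarrow> right_comb d (A \<union> B)"

inductive wide_right_comb :: "nat \<Rightarrow> (nat \<times> nat) list set \<Rightarrow> bool" for d where
  single: "s \<in> seqs d \<Longrightarrow> wide_right_comb d {s}"
| step: "\<lbrakk>right_comb d A; right_comb d B; card A \<le> 1; widely_left d A B\<rbrakk>
           \<Longrightarrow> wide_right_comb d (A \<union> B)"

end

theory Submission
  imports Defs
begin

definition ups :: "(nat \<times> nat) list \<Rightarrow> (nat \<times> nat) list \<Rightarrow> bool" where
  "ups x y \<longleftrightarrow> (\<exists>\<tau> i r s. x = \<tau> @ (i,0) # r \<and> y = \<tau> @ (i,1) # s)"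

definition wides :: "(nat \<times> nat) list \<Rightarrow> (nat \<times> nat) list \<Rightarrow> bool" where
  "wides x y \<longleftrightarrow> (\<exists>\<sigma> a b r s. x = \<sigma> @ (0,a) # r \<and> y = \<sigma> @ (1,b) # s)"

definition UU where "UU x y \<longleftrightarrow> ups x y \<or> ups y x"
definition WW where "WW x y \<longleftrightarrow> wides x y \<or> wides y x"

lemma fd_unique:
  assumes "x = p@c#r" "y = p@c'#s" "c\<noteq>c'" "x = q@e#r'" "y = q@e'#s'" "e\<noteq>e'"
  shows "c = e \<and> c' = e'"
proof -
  consider "length p < length q" | "length q < length p" | "length p = length q" by linarith
  then show ?thesis
  proof cases
    case 1
    have "x ! length p = c" "y ! length p = c'" using assms by (simp_all add: nth_append)
    moreover have "x ! length p = q ! length p" using assms(4) 1 by (simp add: nth_append)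
    moreover have "y ! length p = q ! length p" using assms(5) 1 by (simp add: nth_append)
    ultimately show ?thesis using assms by simp
  next
    case 2
    have "x ! length q = e" using assms(4) by (simp add: nth_append)
    moreover have "y ! length q = e'" using assms(5) by (simp add: nth_append)
    moreover have "x ! length q = p ! length q" using assms(1) 2 by (simp add: nth_append)
    moreover have "y ! length q = p ! length q" using assms(2) 2 by (simp add: nth_append)
    ultimately show ?thesis using assms by simp
  next
    case 3
    have "x ! length p = c" using assms(1) by (simp add: nth_append)
    moreover have "y ! length p = c'" using assms(2) by (simp add: nth_append)
    moreover have "x ! length q = e" using assms(4) by (simp add: nth_append)
    moreover have "y ! length q = e'" using assms(5) by (simp add: nth_append)
    ultimately show ?thesis using 3 by simp
  qed
qed

lemma UU_not_WW: "UU x y \<Longrightarrow> \<not> WW x y"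
proof
  assume u: "UU x y" and w: "WW x y"
  from u obtain \<tau> i r s where h: "(x = \<tau> @ (i,0) # r \<and> y = \<tau> @ (i,1) # s) \<or>
      (y = \<tau> @ (i,0) # r \<and> x = \<tau> @ (i,1) # s)"
    unfolding UU_def ups_def by blast
  from w obtain \<sigma> a b r' s' where g: "(x = \<sigma> @ (0,a) # r' \<and> y = \<sigma> @ (1,b) # s') \<or>
      (y = \<sigma> @ (0,a) # r' \<and> x = \<sigma> @ (1,b) # s')"
    unfolding WW_def wides_def by blast
  from h g show False
  proof (elim disjE conjE)
    assume "x = \<tau> @ (i,0) # r" "y = \<tau> @ (i,1) # s" "x = \<sigma> @ (0,a) # r'" "y = \<sigma> @ (1,b) # s'"
    from fd_unique[OF this(1,2) _ this(3,4)] show False by auto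
  next
    assume "x = \<tau> @ (i,0) # r" "y = \<tau> @ (i,1) # s" "y = \<sigma> @ (0,a) # r'" "x = \<sigma> @ (1,b) # s'"
    from fd_unique[OF this(2,1) _ this(3,4)] show False by auto
  next
    assume "y = \<tau> @ (i,0) # r" "x = \<tau> @ (i,1) # s" "x = \<sigma> @ (0,a) # r'" "y = \<sigma> @ (1,b) # s'"
    from fd_unique[OF this(2,1) _ this(3,4)] show False by auto
  next
    assume "y = \<tau> @ (i,0) # r" "x = \<tau> @ (i,1) # s" "y = \<sigma> @ (0,a) # r'" "x = \<sigma> @ (1,b) # s'"
    from fd_unique[OF this(1,2) _ this(3,4)] show False by auto
  qed
qed

lemma up_comb_ne: "up_comb d A \<Longrightarrow> A \<noteq> {}"
  by (induction rule: up_comb.induct) auto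
lemma right_comb_ne: "right_comb d A \<Longrightarrow> A \<noteq> {}"
  by (induction rule: right_comb.induct) auto

lemma seqs_prefix:
  assumes "x \<in> seqs d" "x = \<tau> @ c # r"
  shows "\<tau> \<in> seqs_lt d" "c \<in> two2"
  using assms unfolding seqs_def seqs_lt_def by auto

lemma ups_comb:
  assumes "x \<in> seqs d" "y \<in> seqs d" "ups x y"
  shows "up_comb d {x, y}"
proof -
  obtain \<tau> i r s where h: "x = \<tau> @ (i,0) # r" "y = \<tau> @ (i,1) # s"
    using assms unfolding ups_def by blast
  have "\<tau> \<in> seqs_lt d" "(i,0) \<in> two2" using seqs_prefix[OF assms(1) h(1)] by auto
  then have nb: "narrowly_below d {x} {y}"
    unfolding narrowly_below_def two2_def using h by (auto simp: prefix_def)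
  have e: "{x} \<union> {y} = {x, y}" by blast
  have "up_comb d ({x} \<union> {y})"
    by (rule up_comb.step) (use assms nb in \<open>auto intro: up_comb.single\<close>)
  then show ?thesis unfolding e .
qed

lemma wides_comb:
  assumes "x \<in> seqs d" "y \<in> seqs d" "wides x y"
  shows "wide_right_comb d {x, y}"
proof -
  obtain \<sigma> a b r s where h: "x = \<sigma> @ (0,a) # r" "y = \<sigma> @ (1,b) # s"
    using assms unfolding wides_def by blast
  have "\<sigma> \<in> seqs_lt d" "(0,a) \<in> two2" "(1,b) \<in> two2"
    using seqs_prefix[OF assms(1) h(1)] seqs_prefix[OF assms(2) h(2)] by auto
  then have nb: "widely_left d {x} {y}"
    unfolding widely_left_def two2_def using h by (auto simp: prefix_def)
  have e: "{x} \<union> {y} = {x, y}" by blast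
  have "wide_right_comb d ({x} \<union> {y})"
    by (rule wide_right_comb.step) (use assms nb in \<open>auto intro: right_comb.single\<close>)
  then show ?thesis unfolding e .
qed

lemma UU_comb: "x \<in> seqs d \<Longrightarrow> y \<in> seqs d \<Longrightarrow> UU x y \<Longrightarrow> up_comb d {x, y}"
proof -
  assume a: "x \<in> seqs d" "y \<in> seqs d" "UU x y"
  have e: "{y, x} = {x, y}" by blast
  show ?thesis using a ups_comb[of x d y] ups_comb[of y d x] unfolding UU_def e by blast
qed
lemma WW_comb: "x \<in> seqs d \<Longrightarrow> y \<in> seqs d \<Longrightarrow> WW x y \<Longrightarrow> wide_right_comb d {x, y}"
proof -
  assume a: "x \<in> seqs d" "y \<in> seqs d" "WW x y"
  have e: "{y, x} = {x, y}" by blast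
  show ?thesis using a wides_comb[of x d y] wides_comb[of y d x] unfolding WW_def e by blast
qed

lemma comb_UU:
  assumes "up_comb d {x, y}" "x \<noteq> y"
  shows "UU x y"
  using assms(1)
proof cases
  case (single s) then show ?thesis using assms(2) by auto
next
  case (step A B)
  obtain a where a: "a \<in> A" using up_comb_ne[OF step(2)] by auto
  obtain b where b: "b \<in> B" using up_comb_ne[OF step(3)] by auto
  from step(5) obtain \<tau> i where "\<forall>a\<in>A. prefix (\<tau> @ [(i, 0)]) a" "\<forall>b\<in>B. prefix (\<tau> @ [(i, 1)]) b"
    unfolding narrowly_below_def by blast
  then have u: "ups a b" using a b unfolding ups_def prefix_def by fastforce
  have "a \<in> {x,y}" "b \<in> {x,y}" using a b step(1) by auto
  moreover have "a \<noteq> b" using u unfolding ups_def by auto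
  ultimately show ?thesis using u unfolding UU_def by auto
qed

lemma comb_WW:
  assumes "wide_right_comb d {x, y}" "x \<noteq> y"
  shows "WW x y"
  using assms(1)
proof cases
  case (single s) then show ?thesis using assms(2) by auto
next
  case (step A B)
  obtain a where a: "a \<in> A" using right_comb_ne[OF step(2)] by auto
  obtain b where b: "b \<in> B" using right_comb_ne[OF step(3)] by auto
  from step(5) obtain \<sigma> where
    "\<forall>a\<in>A. prefix (\<sigma> @ [(0, 0)]) a \<or> prefix (\<sigma> @ [(0, 1)]) a"
    "\<forall>b\<in>B. prefix (\<sigma> @ [(1, 0)]) b \<or> prefix (\<sigma> @ [(1, 1)]) b"
    unfolding widely_left_def by blast
  then have u: "wides a b" using a b unfolding wides_def prefix_def by fastforce
  have "a \<in> {x,y}" "b \<in> {x,y}" using a b step(1) by auto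
  moreover have "a \<noteq> b" using u unfolding wides_def by auto
  ultimately show ?thesis using u unfolding WW_def by auto
qed

lemma UU_lift: "UU x y \<Longrightarrow> UU (c # x @ p) (c # y @ q)"
  unfolding UU_def ups_def
  by (elim disjE exE conjE; simp; metis append.simps(2) append_Cons append_assoc)

lemma WW_lift: "WW x y \<Longrightarrow> WW (c # x @ p) (c # y @ q)"
  unfolding WW_def wides_def
  by (elim disjE exE conjE; simp; metis append.simps(2) append_Cons append_assoc)

lemma UU_sym: "UU x y \<Longrightarrow> UU y x" unfolding UU_def by auto
lemma WW_sym: "WW x y \<Longrightarrow> WW y x" unfolding WW_def by auto

lemma cograph_edges: "cograph V E \<Longrightarrow> \<forall>e\<in>E. e \<subseteq> V"
  by (induction rule: cograph.induct) (auto simp: coproduct_edges_def join_edges_def)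

lemma not_in_a: "\<forall>e\<in>F. e \<subseteq> W \<Longrightarrow> a \<notin> W \<Longrightarrow> {a, b} \<notin> F" by blast
lemma not_in_b: "\<forall>e\<in>F. e \<subseteq> W \<Longrightarrow> b \<notin> W \<Longrightarrow> {a, b} \<notin> F" by blast

definition good where
  "good V E d f \<longleftrightarrow> inj_on f V \<and> f ` V \<subseteq> seqs d \<and>
     (\<forall>v0\<in>V. \<forall>v1\<in>V. v0 \<noteq> v1 \<longrightarrow>
        ({v0, v1} \<in> E \<longrightarrow> UU (f v0) (f v1)) \<and> ({v0, v1} \<notin> E \<longrightarrow> WW (f v0) (f v1)))"

lemma step_lemma:
  fixes V0 V1 :: "'a set"
  assumes disj: "V0 \<inter> V1 = {}"
    and g0: "good V0 E0 d0 f0" and g1: "good V1 E1 d1 f1"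
    and c: "c0 \<in> two2" "c1 \<in> two2" "c0 \<noteq> c1"
    and in0: "\<And>a b. a \<in> V0 \<Longrightarrow> b \<in> V0 \<Longrightarrow> {a,b} \<in> E \<longleftrightarrow> {a,b} \<in> E0"
    and in1: "\<And>a b. a \<in> V1 \<Longrightarrow> b \<in> V1 \<Longrightarrow> {a,b} \<in> E \<longleftrightarrow> {a,b} \<in> E1"
    and cross: "\<And>a b p q. a \<in> V0 \<Longrightarrow> b \<in> V1 \<Longrightarrow>
        ({a,b} \<in> E \<longrightarrow> UU (c0 # p) (c1 # q)) \<and> ({a,b} \<notin> E \<longrightarrow> WW (c0 # p) (c1 # q))"
  shows "\<exists>d f. good (V0 \<union> V1) E d f"
proof -
  define g where "g v = (if v \<in> V0 then c0 # (f0 v @ replicate d1 (0,0))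
                         else c1 # (f1 v @ replicate d0 (0,0)))" for v
  have inj: "inj_on g (V0 \<union> V1)"
  proof (rule inj_onI)
    fix v w assume v: "v \<in> V0 \<union> V1" and w: "w \<in> V0 \<union> V1" and e: "g v = g w"
    show "v = w"
    proof (cases "v \<in> V0"; cases "w \<in> V0")
      assume a: "v \<in> V0" "w \<in> V0"
      then have "f0 v = f0 w" using e by (simp add: g_def)
      moreover have "inj_on f0 V0" using g0 unfolding good_def by simp
      ultimately show ?thesis using a by (simp add: inj_on_eq_iff)
    next
      assume a: "v \<notin> V0" "w \<notin> V0"
      then have a': "v \<in> V1" "w \<in> V1" using v w by simp_all
      from a have "f1 v = f1 w" using e by (simp add: g_def)
      moreover have "inj_on f1 V1" using g1 unfolding good_def by simp
      ultimately show ?thesis using a' by (simp add: inj_on_eq_iff)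
    next
      assume a: "v \<in> V0" "w \<notin> V0"
      then have "c0 = c1" using e unfolding g_def by simp
      then show ?thesis using c(3) by simp
    next
      assume a: "v \<notin> V0" "w \<in> V0"
      then have "c1 = c0" using e unfolding g_def by simp
      then show ?thesis using c(3) by simp
    qed
  qed
  have sq: "g ` (V0 \<union> V1) \<subseteq> seqs (Suc (d0 + d1))"
  proof
    fix x assume "x \<in> g ` (V0 \<union> V1)"
    then obtain v where v: "v \<in> V0 \<union> V1" "x = g v" by blast
    have z: "(0,0) \<in> two2" unfolding two2_def by simp
    show "x \<in> seqs (Suc (d0 + d1))"
    proof (cases "v \<in> V0")
      case True
      then have "f0 v \<in> seqs d0" using g0 unfolding good_def by blast
      then show ?thesis using True v c z unfolding g_def seqs_def by auto
    next
      case False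
      then have "v \<in> V1" using v by auto
      then have "f1 v \<in> seqs d1" using g1 unfolding good_def by blast
      then show ?thesis using False v c z unfolding g_def seqs_def by auto
    qed
  qed
  have pr: "({v, w} \<in> E \<longrightarrow> UU (g v) (g w)) \<and> ({v, w} \<notin> E \<longrightarrow> WW (g v) (g w))"
    if v: "v \<in> V0 \<union> V1" and w: "w \<in> V0 \<union> V1" and ne: "v \<noteq> w" for v w
  proof (cases "v \<in> V0"; cases "w \<in> V0")
    assume a: "v \<in> V0" "w \<in> V0"
    then have "({v, w} \<in> E0 \<longrightarrow> UU (f0 v) (f0 w)) \<and> ({v, w} \<notin> E0 \<longrightarrow> WW (f0 v) (f0 w))"
      using g0 ne unfolding good_def by blast
    then show ?thesis using a in0[OF a] UU_lift WW_lift by (simp add: g_def)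
  next
    assume a: "v \<notin> V0" "w \<notin> V0"
    then have a': "v \<in> V1" "w \<in> V1" using v w by auto
    then have "({v, w} \<in> E1 \<longrightarrow> UU (f1 v) (f1 w)) \<and> ({v, w} \<notin> E1 \<longrightarrow> WW (f1 v) (f1 w))"
      using g1 ne unfolding good_def by blast
    then show ?thesis using a in1[OF a'] UU_lift WW_lift by (simp add: g_def)
  next
    assume a: "v \<in> V0" "w \<notin> V0"
    then have "w \<in> V1" using w by auto
    then show ?thesis using a cross[OF a(1) \<open>w \<in> V1\<close>] by (simp add: g_def)
  next
    assume a: "v \<notin> V0" "w \<in> V0"
    then have "v \<in> V1" using v by auto
    have e: "{v, w} = {w, v}" by blast
    show ?thesis using a cross[OF a(2) \<open>v \<in> V1\<close>] UU_sym WW_sym unfolding e by (simp add: g_def)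
  qed
  have "good (V0 \<union> V1) E (Suc (d0 + d1)) g"
    unfolding good_def using inj sq pr by blast
  then show ?thesis by blast
qed

lemma cograph_good: "cograph V E \<Longrightarrow> \<exists>d f. good V E d f"
proof (induction rule: cograph.induct)
  case (single v)
  have "good {v} {} 0 (\<lambda>_. [])" unfolding good_def seqs_def by auto
  then show ?case by blast
next
  case (coprod V0 E0 V1 E1)
  from coprod.IH obtain d0 f0 d1 f1 where g: "good V0 E0 d0 f0" "good V1 E1 d1 f1" by blast
  have s0: "\<forall>e\<in>E0. e \<subseteq> V0" and s1: "\<forall>e\<in>E1. e \<subseteq> V1"
    using cograph_edges coprod.hyps by blast+
  show ?case
  proof (rule step_lemma[OF coprod.hyps(3) g, of "(0,0)" "(1,0)"])
    show "(0,0) \<in> two2" "(1,0) \<in> two2" "(0::nat,0::nat) \<noteq> (1,0)" by (auto simp: two2_def)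
  next
    fix a b assume "a \<in> V0" "b \<in> V0"
    then have "a \<notin> V1" using coprod.hyps(3) by blast
    then have "{a, b} \<notin> E1" using not_in_a[OF s1] by blast
    then show "{a, b} \<in> coproduct_edges E0 E1 \<longleftrightarrow> {a, b} \<in> E0"
      unfolding coproduct_edges_def by simp
  next
    fix a b assume "a \<in> V1" "b \<in> V1"
    then have "a \<notin> V0" using coprod.hyps(3) by blast
    then have "{a, b} \<notin> E0" using not_in_a[OF s0] by blast
    then show "{a, b} \<in> coproduct_edges E0 E1 \<longleftrightarrow> {a, b} \<in> E1"
      unfolding coproduct_edges_def by simp
  next
    fix a b p q assume "a \<in> V0" "b \<in> V1"
    then have "a \<notin> V1" "b \<notin> V0" using coprod.hyps(3) by blast+
    then have "{a, b} \<notin> E1" "{a, b} \<notin> E0" using not_in_a[OF s1] not_in_b[OF s0] by blast+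
    then have "{a, b} \<notin> coproduct_edges E0 E1"
      unfolding coproduct_edges_def by simp
    moreover have "WW ((0,0) # p) ((1,0) # q)"
      unfolding WW_def wides_def by (rule disjI1, rule exI[of _ "[]"]) auto
    ultimately show "({a, b} \<in> coproduct_edges E0 E1 \<longrightarrow> UU ((0,0) # p) ((1,0) # q)) \<and>
       ({a, b} \<notin> coproduct_edges E0 E1 \<longrightarrow> WW ((0,0) # p) ((1,0) # q))" by blast
  qed
next
  case (join V0 E0 V1 E1)
  from join.IH obtain d0 f0 d1 f1 where g: "good V0 E0 d0 f0" "good V1 E1 d1 f1" by blast
  have s0: "\<forall>e\<in>E0. e \<subseteq> V0" and s1: "\<forall>e\<in>E1. e \<subseteq> V1"
    using cograph_edges join.hyps by blast+
  show ?case
  proof (rule step_lemma[OF join.hyps(3) g, of "(0,0)" "(0,1)"])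
    show "(0,0) \<in> two2" "(0,1) \<in> two2" "(0::nat,0::nat) \<noteq> (0,1)" by (auto simp: two2_def)
  next
    fix a b assume "a \<in> V0" "b \<in> V0"
    then show "{a, b} \<in> join_edges V0 E0 V1 E1 \<longleftrightarrow> {a, b} \<in> E0"
    proof -
      assume ab: "a \<in> V0" "b \<in> V0"
      have "a \<notin> V1" using ab join.hyps(3) by blast
      then have "{a, b} \<notin> E1" using not_in_a[OF s1] by blast
      moreover have "\<not> (\<exists>x y. {a, b} = {x, y} \<and> x \<in> V0 \<and> y \<in> V1)"
      proof
        assume "\<exists>x y. {a, b} = {x, y} \<and> x \<in> V0 \<and> y \<in> V1"
        then obtain x y where "{a, b} = {x, y}" "y \<in> V1" by blast
        then have "y \<in> {a, b}" by simp
        then show False using ab \<open>y \<in> V1\<close> join.hyps(3) by blast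
      qed
      ultimately show ?thesis unfolding join_edges_def by blast
    qed
  next
    fix a b assume "a \<in> V1" "b \<in> V1"
    then show "{a, b} \<in> join_edges V0 E0 V1 E1 \<longleftrightarrow> {a, b} \<in> E1"
    proof -
      assume ab: "a \<in> V1" "b \<in> V1"
      have "a \<notin> V0" using ab join.hyps(3) by blast
      then have "{a, b} \<notin> E0" using not_in_a[OF s0] by blast
      moreover have "\<not> (\<exists>x y. {a, b} = {x, y} \<and> x \<in> V0 \<and> y \<in> V1)"
      proof
        assume "\<exists>x y. {a, b} = {x, y} \<and> x \<in> V0 \<and> y \<in> V1"
        then obtain x y where "{a, b} = {x, y}" "x \<in> V0" by blast
        then have "x \<in> {a, b}" by simp
        then show False using ab \<open>x \<in> V0\<close> join.hyps(3) by blast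
      qed
      ultimately show ?thesis unfolding join_edges_def by blast
    qed
  next
    fix a b p q assume "a \<in> V0" "b \<in> V1"
    then have "{a, b} \<in> {{x, y} |x y. x \<in> V0 \<and> y \<in> V1}"
      by (intro CollectI exI[of _ a] exI[of _ b]) simp
    then have "{a, b} \<in> join_edges V0 E0 V1 E1"
      unfolding join_edges_def by (rule UnI2)
    moreover have "UU ((0,0) # p) ((0,1) # q)"
      unfolding UU_def ups_def by (rule disjI1, rule exI[of _ "[]"]) auto
    ultimately show "({a, b} \<in> join_edges V0 E0 V1 E1 \<longrightarrow> UU ((0,0) # p) ((0,1) # q)) \<and>
       ({a, b} \<notin> join_edges V0 E0 V1 E1 \<longrightarrow> WW ((0,0) # p) ((0,1) # q))" by blast
  qed
qed

theorem lemma4p6: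
  fixes V :: "'a set" and E :: "'a set set"
  assumes "cograph V E"
  shows "\<exists>(d::nat) (f :: 'a \<Rightarrow> (nat \<times> nat) list).
           inj_on f V \<and> f ` V \<subseteq> seqs d \<and>
           (\<forall>v0\<in>V. \<forall>v1\<in>V. v0 \<noteq> v1 \<longrightarrow>
              (({v0, v1} \<in> E) \<longleftrightarrow> up_comb d {f v0, f v1}) \<and>
              (({v0, v1} \<notin> E) \<longleftrightarrow> wide_right_comb d {f v0, f v1}))"
proof -
  obtain d f where g: "good V E d f" using cograph_good[OF assms] by blast
  have "(({v0, v1} \<in> E) \<longleftrightarrow> up_comb d {f v0, f v1}) \<and>
        (({v0, v1} \<notin> E) \<longleftrightarrow> wide_right_comb d {f v0, f v1})"
    if v: "v0 \<in> V" "v1 \<in> V" "v0 \<noteq> v1" for v0 v1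
  proof -
    have s: "f v0 \<in> seqs d" "f v1 \<in> seqs d" using g v unfolding good_def by auto
    have ne: "f v0 \<noteq> f v1" using g v unfolding good_def inj_on_def by blast
    have p: "({v0, v1} \<in> E \<longrightarrow> UU (f v0) (f v1)) \<and> ({v0, v1} \<notin> E \<longrightarrow> WW (f v0) (f v1))"
      using g v unfolding good_def by blast
    have 1: "{v0, v1} \<in> E \<longleftrightarrow> up_comb d {f v0, f v1}"
    proof
      assume "{v0, v1} \<in> E"
      then show "up_comb d {f v0, f v1}" using p UU_comb[OF s] by simp
    next
      assume "up_comb d {f v0, f v1}"
      then have "UU (f v0) (f v1)" using comb_UU ne by simp
      then have "\<not> WW (f v0) (f v1)" using UU_not_WW by simp
      then show "{v0, v1} \<in> E" using p by auto
    qed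
    have 2: "{v0, v1} \<notin> E \<longleftrightarrow> wide_right_comb d {f v0, f v1}"
    proof
      assume "{v0, v1} \<notin> E"
      then show "wide_right_comb d {f v0, f v1}" using p WW_comb[OF s] by simp
    next
      assume "wide_right_comb d {f v0, f v1}"
      then have "WW (f v0) (f v1)" using comb_WW ne by simp
      then have "\<not> UU (f v0) (f v1)" using UU_not_WW by auto
      then show "{v0, v1} \<notin> E" using p by auto
    qed
    show ?thesis using 1 2 by simp
  qed
  moreover have "inj_on f V" "f ` V \<subseteq> seqs d" using g unfolding good_def by simp_all
  ultimately show ?thesis by (intro exI[of _ d] exI[of _ f] conjI ballI impI) auto
qed

end
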